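(* For every $\delta\in(0,1)$ there exists $c(\delta)>0$ such that the following holds. Let $N\in\mathbb N$, let $p_1,\dots,p_N\in[0,1/2]$, and let $\Omega$ be a random subset of $\{1,\dots,N\}$ in which each $i$ belongs to $\Omega$ independently of the others with probability $p_i$. Let $\omega:=\mathbb E\#\Omega=\sum_{i=1}^N p_i$ and suppose $\omega\ge c(\delta)$. Then, with $\mathcal R$ the event $\{(1-\delta)\omega\le\#\Omega\le 5\omega\}$, $$\mathbb E(\#\Omega\mid\mathcal R)\ge\mathbb E\#\Omega.$$
   Context: $\#\Omega$ denotes the cardinality of $\Omega$. *)

theory Defs
  imports Complex_Main
begin

text \<open>Random subset Omega of {1..N}: each i is included independently with probability p i.
  The probability that Omega equals a given subset S of {1..N}.\<close>
definition rand_subset_prob :: "nat \<Rightarrow> (nat \<Rightarrow> real) \<Rightarrow> nat set \<Rightarrow> real" where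
  "rand_subset_prob N p S = (\<Prod>i\<in>S. p i) * (\<Prod>i\<in>{1..N} - S. 1 - p i)"

definition rs_prob :: "nat \<Rightarrow> (nat \<Rightarrow> real) \<Rightarrow> (nat set \<Rightarrow> bool) \<Rightarrow> real" where
  "rs_prob N p E = (\<Sum>S\<in>Pow {1..N}. if E S then rand_subset_prob N p S else 0)"

definition rs_card_exp_on :: "nat \<Rightarrow> (nat \<Rightarrow> real) \<Rightarrow> (nat set \<Rightarrow> bool) \<Rightarrow> real" where
  "rs_card_exp_on N p E = (\<Sum>S\<in>Pow {1..N}. if E S then real (card S) * rand_subset_prob N p S else 0)"

definition rs_card_exp :: "nat \<Rightarrow> (nat \<Rightarrow> real) \<Rightarrow> real" where
  "rs_card_exp N p = rs_card_exp_on N p (\<lambda>_. True)"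

definition rs_cond_card_exp :: "nat \<Rightarrow> (nat \<Rightarrow> real) \<Rightarrow> (nat set \<Rightarrow> bool) \<Rightarrow> real" where
  "rs_cond_card_exp N p E = rs_card_exp_on N p E / rs_prob N p E"

end

theory Submission
  imports Defs
begin

lemma gen_fun:
  fixes a :: real
  shows "(\<Sum>S\<in>Pow {1..N}. a ^ card S * rand_subset_prob N p S) = (\<Prod>i\<in>{1..N}. a * p i + (1 - p i))"
proof -
  have "(\<Prod>i\<in>{1..N}. a * p i + (1 - p i)) =
     (\<Sum>X\<in>Pow {1..N}. (\<Prod>i\<in>X. a * p i) * (\<Prod>i\<in>{1..N}-X. 1 - p i))"
    by (rule prod_add) simp
  also have "\<dots> = (\<Sum>S\<in>Pow {1..N}. a ^ card S * rand_subset_prob N p S)"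
    by (rule sum.cong) (auto simp: rand_subset_prob_def prod.distrib)
  finally show ?thesis by simp
qed

lemma total_one: "(\<Sum>S\<in>Pow {1..N}. rand_subset_prob N p S) = 1"
  using gen_fun[of 1 N p] by simp

lemma incl_prob:
  assumes i: "i \<in> {1..N}"
  shows "(\<Sum>S\<in>Pow {1..N}. (if i \<in> S then 1 else 0) * rand_subset_prob N p S) = p i"
proof -
  let ?f2 = "\<lambda>j. if j = i then 0 else 1 - p j"
  have "(\<Prod>j\<in>{1..N}. p j + ?f2 j) =
     (\<Sum>X\<in>Pow {1..N}. (\<Prod>j\<in>X. p j) * (\<Prod>j\<in>{1..N}-X. ?f2 j))"
    by (rule prod_add) simp
  also have "\<dots> = (\<Sum>S\<in>Pow {1..N}. (if i \<in> S then 1 else 0) * rand_subset_prob N p S)"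
  proof (rule sum.cong)
    fix S assume S: "S \<in> Pow {1..N}"
    show "(\<Prod>j\<in>S. p j) * (\<Prod>j\<in>{1..N}-S. ?f2 j) = (if i \<in> S then 1 else 0) * rand_subset_prob N p S"
    proof (cases "i \<in> S")
      case True
      then have "(\<Prod>j\<in>{1..N}-S. ?f2 j) = (\<Prod>j\<in>{1..N}-S. 1 - p j)"
        by (intro prod.cong) auto
      then show ?thesis using True by (simp add: rand_subset_prob_def)
    next
      case False
      then have "(\<Prod>j\<in>{1..N}-S. ?f2 j) = 0"
        using i by (intro prod_zero) auto
      then show ?thesis using False by simp
    qed
  qed simp
  finally have "(\<Sum>S\<in>Pow {1..N}. (if i \<in> S then 1 else 0) * rand_subset_prob N p S) = (\<Prod>j\<in>{1..N}. p j + ?f2 j)" by simp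
  also have "\<dots> = (\<Prod>j\<in>{1..N}. if j = i then p i else 1)"
    by (rule prod.cong) auto
  also have "\<dots> = p i" using i by (simp add: prod.delta)
  finally show ?thesis .
qed

lemma mean_card: "(\<Sum>S\<in>Pow {1..N}. real (card S) * rand_subset_prob N p S) = (\<Sum>i=1..N. p i)"
proof -
  have "(\<Sum>S\<in>Pow {1..N}. real (card S) * rand_subset_prob N p S) =
        (\<Sum>S\<in>Pow {1..N}. \<Sum>i\<in>{1..N}. (if i \<in> S then 1 else 0) * rand_subset_prob N p S)"
  proof (rule sum.cong)
    fix S assume S: "S \<in> Pow {1..N}"
    have fS: "finite S" using S finite_subset by blast
    have "(\<Sum>i\<in>{1..N}. (if i \<in> S then 1 else 0) :: real) = (\<Sum>i\<in>{1..N} \<inter> S. 1)"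
      by (simp only: sum.inter_restrict[OF finite_atLeastAtMost])
    also have "{1..N} \<inter> S = S" using S by auto
    finally have "real (card S) = (\<Sum>i\<in>{1..N}. (if i \<in> S then 1 else 0) :: real)" by simp
    then show "real (card S) * rand_subset_prob N p S = (\<Sum>i\<in>{1..N}. (if i \<in> S then 1 else 0) * rand_subset_prob N p S)"
      by (simp add: sum_distrib_right)
  qed simp
  also have "\<dots> = (\<Sum>i\<in>{1..N}. \<Sum>S\<in>Pow {1..N}. (if i \<in> S then 1 else 0) * rand_subset_prob N p S)"
    by (rule sum.swap)
  also have "\<dots> = (\<Sum>i=1..N. p i)"
    by (intro sum.cong refl incl_prob)
  finally show ?thesis .
qed

lemma nat_le_pow: "real n \<le> 2 * (5/4) ^ n"
proof (induction n rule: nat_less_induct)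
  case (1 n)
  show ?case
  proof (cases "n \<le> 4")
    case True
    then have "n = 0 \<or> n = 1 \<or> n = 2 \<or> n = 3 \<or> n = 4" by auto
    then show ?thesis by (auto simp: eval_nat_numeral)
  next
    case False
    then obtain m where m: "n = Suc m" "m \<ge> 4" by (cases n) auto
    have "real m \<le> 2 * (5/4) ^ m" using 1 m by auto
    moreover have "real n \<le> 5/4 * real m" using m by simp
    ultimately show ?thesis using m by simp
  qed
qed

lemma F_nonneg:
  assumes "\<forall>i\<in>{1..N}. 0 \<le> p i \<and> p i \<le> 1/2" "S \<subseteq> {1..N}"
  shows "0 \<le> rand_subset_prob N p S"
  unfolding rand_subset_prob_def using assms
  by (intro mult_nonneg_nonneg prod_nonneg) force+

theorem lemma2:
  shows "\<forall>\<delta>::real. 0 < \<delta> \<and> \<delta> < 1 \<longrightarrow>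
    (\<exists>c>0. \<forall>(N::nat) (p::nat \<Rightarrow> real).
       (\<forall>i\<in>{1..N}. 0 \<le> p i \<and> p i \<le> 1/2) \<longrightarrow>
       (\<Sum>i=1..N. p i) \<ge> c \<longrightarrow>
       (let \<omega> = (\<Sum>i=1..N. p i);
            R = (\<lambda>S. (1 - \<delta>) * \<omega> \<le> real (card S) \<and> real (card S) \<le> 5 * \<omega>)
        in rs_cond_card_exp N p R \<ge> rs_card_exp N p))"
proof (intro allI impI)
  fix \<delta> :: real
  assume d: "0 < \<delta> \<and> \<delta> < 1"
  show "\<exists>c>0. \<forall>(N::nat) (p::nat \<Rightarrow> real).
       (\<forall>i\<in>{1..N}. 0 \<le> p i \<and> p i \<le> 1/2) \<longrightarrow>
       (\<Sum>i=1..N. p i) \<ge> c \<longrightarrow>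
       (let \<omega> = (\<Sum>i=1..N. p i);
            R = (\<lambda>S. (1 - \<delta>) * \<omega> \<le> real (card S) \<and> real (card S) \<le> 5 * \<omega>)
        in rs_cond_card_exp N p R \<ge> rs_card_exp N p)"
  proof (intro exI[of _ 2] conjI allI impI)
    fix N :: nat and p :: "nat \<Rightarrow> real"
    assume hp: "\<forall>i\<in>{1..N}. 0 \<le> p i \<and> p i \<le> 1/2"
    define \<omega> where "\<omega> = (\<Sum>i=1..N. p i)"
    assume "(\<Sum>i=1..N. p i) \<ge> 2"
    then have w2: "\<omega> \<ge> 2" by (simp add: \<omega>_def)
    define R where "R = (\<lambda>S::nat set. (1 - \<delta>) * \<omega> \<le> real (card S) \<and> real (card S) \<le> 5 * \<omega>)"
    define F where "F = rand_subset_prob N p"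
    define P where "P = Pow {1..N}"
    define g where "g = (\<lambda>S. (real (card S) - \<omega>) * F S)"
    define low where "low = (\<lambda>S::nat set. real (card S) < (1 - \<delta>) * \<omega>)"
    define high where "high = (\<lambda>S::nat set. real (card S) > 5 * \<omega>)"
    have Fnn: "\<And>S. S \<in> P \<Longrightarrow> 0 \<le> F S" unfolding F_def P_def using F_nonneg[OF hp] by auto
    have finP: "finite P" by (simp add: P_def)
    have tot: "(\<Sum>S\<in>P. F S) = 1" using total_one by (simp add: P_def F_def)
    have mean: "(\<Sum>S\<in>P. real (card S) * F S) = \<omega>" using mean_card by (simp add: P_def F_def \<omega>_def)
    have g0: "(\<Sum>S\<in>P. g S) = 0"
      unfolding g_def by (simp add: left_diff_distrib sum_subtractf mean tot flip: sum_distrib_left)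
    have dw: "(1 - \<delta>) * \<omega> < 5 * \<omega>" 
    proof -
      have "0 < \<delta> * \<omega>" using d w2 by simp
      moreover have "(1 - \<delta>) * \<omega> = \<omega> - \<delta> * \<omega>" by (simp add: algebra_simps)
      ultimately show ?thesis using w2 by linarith
    qed
    have split: "\<And>S. g S = (if R S then g S else 0) + (if low S then g S else 0) + (if high S then g S else 0)"
      unfolding R_def low_def high_def using dw by auto
    have gsplit: "(\<Sum>S\<in>P. g S) = (\<Sum>S\<in>P. if R S then g S else 0) + (\<Sum>S\<in>P. if low S then g S else 0)
         + (\<Sum>S\<in>P. if high S then g S else 0)"
      by (subst split) (simp add: sum.distrib)
    have "(\<Sum>S\<in>P. if low S then g S else 0) \<le> (\<Sum>S\<in>P. if S = {} then - \<omega> * F S else 0)"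
    proof (rule sum_mono)
      fix S assume S: "S \<in> P"
      show "(if low S then g S else 0) \<le> (if S = {} then - \<omega> * F S else 0)"
      proof (cases "S = {}")
        case True
        then show ?thesis using d w2 by (simp add: low_def g_def)
      next
        case False
        have "low S \<Longrightarrow> g S \<le> 0" unfolding low_def g_def using Fnn[OF S] d w2
          by (intro mult_nonpos_nonneg) (auto simp: algebra_simps intro: order.trans[of _ "(1-\<delta>)*\<omega>"]
              dest: mult_left_le_one_le[of \<omega> "1-\<delta>"])
        then show ?thesis using False by auto
      qed
    qed
    also have "\<dots> = - \<omega> * F {}" by (simp add: P_def)
    finally have lowb: "(\<Sum>S\<in>P. if low S then g S else 0) \<le> - \<omega> * F {}" .
    have F0: "F {} = (\<Prod>i\<in>{1..N}. 1 - p i)" by (simp add: F_def rand_subset_prob_def)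
    have "exp (-2 * \<omega>) = (\<Prod>i\<in>{1..N}. exp (-2 * p i))"
      by (simp add: \<omega>_def sum_distrib_left exp_sum flip: sum_negf)
    also have "\<dots> \<le> (\<Prod>i\<in>{1..N}. 1 - p i)"
    proof (rule prod_mono)
      fix i assume i: "i \<in> {1..N}"
      have a: "0 \<le> p i" "p i \<le> 1/2" using hp i by auto
      have "- p i - 2 * (p i)\<^sup>2 \<le> ln (1 - p i)" by (rule ln_one_minus_pos_lower_bound[OF a])
      moreover have "-2 * p i \<le> - p i - 2 * (p i)\<^sup>2" using a mult_left_mono[of "2 * p i" 1 "p i"] by (simp add: power2_eq_square)
      ultimately have "exp (-2 * p i) \<le> exp (ln (1 - p i))" by simp
      then show "0 \<le> exp (-2 * p i) \<and> exp (-2 * p i) \<le> 1 - p i" using a by simp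
    qed
    finally have F0b: "exp (-2 * \<omega>) \<le> F {}" using F0 by simp
    define a where "a = 5/4 * exp (1::real)"
    have "(\<Sum>S\<in>P. if high S then g S else 0) \<le> (\<Sum>S\<in>P. 2 * exp (-5 * \<omega>) * (a ^ card S * F S))"
    proof (rule sum_mono)
      fix S assume S: "S \<in> P"
      have "0 \<le> 2 * exp (-5 * \<omega>) * (a ^ card S * F S)" using Fnn[OF S] by (simp add: a_def)
      moreover have "high S \<Longrightarrow> g S \<le> 2 * exp (-5 * \<omega>) * (a ^ card S * F S)"
      proof -
        assume h: "high S"
        have "g S \<le> real (card S) * F S" unfolding g_def using Fnn[OF S] w2
          by (intro mult_right_mono) auto
        also have "real (card S) \<le> 2 * (5/4) ^ card S * exp (real (card S) - 5 * \<omega>)"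
        proof -
          have "1 \<le> exp (real (card S) - 5 * \<omega>)" using h by (simp add: high_def)
          then have "2 * (5/4) ^ card S * 1 \<le> 2 * (5/4) ^ card S * exp (real (card S) - 5 * \<omega>)"
            by (intro mult_left_mono) auto
          then show ?thesis using nat_le_pow[of "card S"] by linarith
        qed
        then have "real (card S) * F S \<le> 2 * (5/4) ^ card S * exp (real (card S) - 5 * \<omega>) * F S"
          using Fnn[OF S] by (rule mult_right_mono)
        also have "\<dots> = 2 * exp (-5 * \<omega>) * (a ^ card S * F S)"
        proof -
          have e1: "exp (real (card S) - 5 * \<omega>) = exp 1 ^ card S * exp (-5 * \<omega>)"
          proof -
            have "exp (real (card S) - 5 * \<omega>) = exp (real (card S) * 1) * exp (-5 * \<omega>)"
              by (simp flip: exp_add)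
            then show ?thesis by (simp only: exp_of_nat_mult)
          qed
          have ha: "a ^ card S = (5/4) ^ card S * exp 1 ^ card S"
            unfolding a_def by (rule power_mult_distrib)
          show ?thesis unfolding e1 ha by (simp only: mult_ac)
        qed
        finally show ?thesis .
      qed
      ultimately show "(if high S then g S else 0) \<le> 2 * exp (-5 * \<omega>) * (a ^ card S * F S)" by auto
    qed
    also have "\<dots> = 2 * exp (-5 * \<omega>) * (\<Prod>i\<in>{1..N}. a * p i + (1 - p i))"
      unfolding P_def F_def by (simp only: gen_fun flip: sum_distrib_left)
    also have "\<dots> \<le> 2 * exp (-5 * \<omega>) * exp ((a - 1) * \<omega>)"
    proof -
      have "(\<Prod>i\<in>{1..N}. a * p i + (1 - p i)) \<le> (\<Prod>i\<in>{1..N}. exp ((a - 1) * p i))"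
      proof (rule prod_mono)
        fix i assume i: "i \<in> {1..N}"
        have "a \<ge> 1" unfolding a_def using exp_ge_add_one_self[of 1] by simp
        then have "0 \<le> a * p i + (1 - p i)" using hp i
          by (smt (verit, best) mult_le_cancel_right1)
        moreover have "a * p i + (1 - p i) \<le> exp ((a - 1) * p i)"
          using exp_ge_add_one_self[of "(a - 1) * p i"] by (simp add: algebra_simps)
        ultimately show "0 \<le> a * p i + (1 - p i) \<and> a * p i + (1 - p i) \<le> exp ((a - 1) * p i)" by simp
      qed
      also have "\<dots> = exp ((a - 1) * \<omega>)"
        by (simp add: \<omega>_def exp_sum sum_distrib_left)
      finally show ?thesis by (intro mult_left_mono) auto
    qed
    also have "\<dots> = 2 * exp ((a - 6) * \<omega>)"
      by (simp add: mult.assoc flip: exp_add) (simp add: algebra_simps)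
    also have "\<dots> \<le> 2 * exp (-(9/4) * \<omega>)"
    proof -
      have "a \<le> 15/4" using exp_le by (simp add: a_def)
      then have "(a - 6) * \<omega> \<le> -(9/4) * \<omega>" using w2 by (intro mult_right_mono) auto
      then show ?thesis by simp
    qed
    finally have highb: "(\<Sum>S\<in>P. if high S then g S else 0) \<le> 2 * exp (-(9/4) * \<omega>)" .
    have key: "2 * exp (-(9/4) * \<omega>) < \<omega> * exp (-2 * \<omega>)"
    proof -
      define E where "E = exp (-(9/4) * \<omega>)"
      have Ep: "E > 0" by (simp add: E_def)
      have "-2 * \<omega> = \<omega> / 4 + (-(9/4) * \<omega>)" by simp
      then have e: "exp (-2 * \<omega>) = exp (\<omega> / 4) * E" unfolding E_def by (simp only: exp_add)
      have ge: "1 + \<omega>/4 \<le> exp (\<omega>/4)" by (rule exp_ge_add_one_self)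
      have three: "3 \<le> \<omega> * (1 + \<omega>/4)" using w2 mult_mono[of 2 \<omega> "3/2" "1 + \<omega>/4"] by simp
      have "\<omega> * (1 + \<omega>/4) \<le> \<omega> * exp (\<omega>/4)" using ge w2 by (intro mult_left_mono) auto
      then have "3 \<le> \<omega> * exp (\<omega>/4)" using three by linarith
      then have "3 * E \<le> (\<omega> * exp (\<omega>/4)) * E" using Ep by (intro mult_right_mono) auto
      then have "2 * E < \<omega> * exp (-2 * \<omega>)" unfolding e using Ep by (simp add: mult.assoc)
      then show ?thesis unfolding E_def .
    qed
    have Rpos: "(\<Sum>S\<in>P. if R S then g S else 0) > 0"
    proof -
      have "\<omega> * exp (-2 * \<omega>) \<le> \<omega> * F {}" using F0b w2 by (intro mult_left_mono) auto
      then show ?thesis using g0 gsplit lowb highb key by linarith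
    qed
    have eq1: "(\<Sum>S\<in>P. if R S then g S else 0) = rs_card_exp_on N p R - \<omega> * rs_prob N p R"
      unfolding rs_card_exp_on_def rs_prob_def g_def
      by (simp add: P_def F_def sum_distrib_left flip: sum_subtractf) (rule sum.cong, auto simp: algebra_simps F_def)
    have probnn: "rs_prob N p R \<ge> 0" unfolding rs_prob_def
      using Fnn by (intro sum_nonneg) (auto simp: P_def F_def)
    have probpos: "rs_prob N p R > 0"
    proof (rule ccontr)
      assume "\<not> rs_prob N p R > 0"
      then have z: "rs_prob N p R = 0" using probnn by simp
      have z': "(\<Sum>S\<in>P. if R S then F S else 0) = 0"
        using z unfolding rs_prob_def P_def F_def .
      have "\<forall>S\<in>P. (if R S then F S else 0) = 0"
        using z' sum_nonneg_eq_0_iff[OF finP, of "\<lambda>S. if R S then F S else 0"] Fnn by auto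
      then have "(\<Sum>S\<in>P. if R S then g S else 0) = 0"
        by (intro sum.neutral) (auto simp: g_def split: if_splits)
      then show False using Rpos by simp
    qed
    have ce: "rs_card_exp N p = \<omega>"
      using mean by (simp add: rs_card_exp_def rs_card_exp_on_def P_def F_def)
    have "\<omega> * rs_prob N p R < rs_card_exp_on N p R" using Rpos eq1 by simp
    then have "\<omega> \<le> rs_cond_card_exp N p R"
      unfolding rs_cond_card_exp_def using probpos by (simp add: pos_le_divide_eq)
    then have "rs_card_exp N p \<le> rs_cond_card_exp N p R" using ce by simp
    then show "let \<omega> = (\<Sum>i=1..N. p i);
            R = (\<lambda>S. (1 - \<delta>) * \<omega> \<le> real (card S) \<and> real (card S) \<le> 5 * \<omega>)
        in rs_cond_card_exp N p R \<ge> rs_card_exp N p" by (simp add: R_def \<omega>_def Let_def)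
  qed simp
qed

end
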